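(* Let $\Omega\subset\mathbb{R}^d$ be a bounded open set with regular boundary $\partial\Omega$, and let $\pi$ be a probability density on $\Omega$, positive on $\Omega$, whose first and second derivatives are continuous. Let $P$ be a polynomial on $\mathbb{R}^d$ and let $\psi=P\sqrt{\pi}$. If $$\pi(\mathbf x)\,\frac{\partial P(\mathbf x)}{\partial x_j}=0\quad\text{for all }\mathbf x\in\partial\Omega,\ j=1,\ldots,d,$$ then the zero-variance estimator is unbiased, i.e. $\mathbb{E}_\pi\!\left[\frac{H\psi}{\sqrt{\pi}}\right]=\int_\Omega H\psi(\mathbf x)\sqrt{\pi(\mathbf x)}\,d\mathbf x=0$, so that for every $\pi$-integrable $f$ the function $\tilde f=f+\frac{H\psi}{\sqrt\pi}$ satisfies $\mathbb{E}_\pi[\tilde f]=\mathbb{E}_\pi[f]$.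
   Context: $H$ denotes the Schrödinger-type Hamiltonian operator associated with $\pi$: for a twice differentiable $g$, $Hg=-\frac12\Delta g+Vg$, where $\Delta=\sum_{i=1}^d\partial^2/\partial x_i^2$ is the Laplacian and $V=\frac{1}{2\sqrt{\pi}}\Delta\sqrt{\pi}$ (so that $H\sqrt\pi=0$). For $\psi=P\sqrt\pi$ one has $\frac{H\psi}{\sqrt\pi}=-\frac12\Delta P+\nabla P\cdot\mathbf z$ with $\mathbf z=-\frac12\nabla\ln\pi$. $\mathbf n$ denotes the outward unit normal to $\partial\Omega$. *)

theory Defs
  imports "HOL-Analysis.Analysis"
begin

definition partial :: "'n::finite \<Rightarrow> (real^'n \<Rightarrow> real) \<Rightarrow> real^'n \<Rightarrow> real" where
  "partial j f x = deriv (\<lambda>t. f (x + t *\<^sub>R axis j 1)) 0"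

definition laplacian :: "(real^'n::finite \<Rightarrow> real) \<Rightarrow> real^'n \<Rightarrow> real" where
  "laplacian f x = (\<Sum>j\<in>UNIV. partial j (partial j f) x)"

definition potential :: "(real^'n::finite \<Rightarrow> real) \<Rightarrow> real^'n \<Rightarrow> real" where
  "potential \<pi> x = laplacian (\<lambda>y. sqrt (\<pi> y)) x / (2 * sqrt (\<pi> x))"

definition hamiltonian :: "(real^'n::finite \<Rightarrow> real) \<Rightarrow> (real^'n \<Rightarrow> real) \<Rightarrow> real^'n \<Rightarrow> real" where
  "hamiltonian \<pi> g x = - (1/2) * laplacian g x + potential \<pi> x * g x"

definition is_polynomial :: "(real^'n::finite \<Rightarrow> real) \<Rightarrow> bool" where
  "is_polynomial P \<longleftrightarrow> (\<exists>A c. finite A \<and>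
     (\<forall>x. P x = (\<Sum>\<alpha>\<in>A. c \<alpha> * (\<Prod>j\<in>UNIV. (x $ j) ^ (\<alpha> j)))))"

definition C1_on :: "(real^'n::finite) set \<Rightarrow> (real^'n \<Rightarrow> real) \<Rightarrow> bool" where
  "C1_on S f \<longleftrightarrow> (\<exists>f'. (\<forall>x\<in>S. (f has_derivative f' x) (at x)) \<and>
                         (\<forall>v. continuous_on S (\<lambda>x. f' x v)))"

definition C2_on :: "(real^'n::finite) set \<Rightarrow> (real^'n \<Rightarrow> real) \<Rightarrow> bool" where
  "C2_on S f \<longleftrightarrow> (\<exists>f' f''. (\<forall>x\<in>S. (f has_derivative f' x) (at x)) \<and>
        (\<forall>x\<in>S. \<forall>v. ((\<lambda>y. f' y v) has_derivative f'' x v) (at x)) \<and>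
        (\<forall>v w. continuous_on S (\<lambda>x. f'' x v w)))"

text \<open>Regular (C^1) boundary: near every boundary point, after choosing a coordinate k and
  an orientation s, the domain is the subgraph of a C^1 function of the remaining coordinates.\<close>
definition regular_boundary :: "(real^'n::finite) set \<Rightarrow> bool" where
  "regular_boundary \<Omega> \<longleftrightarrow>
     (\<forall>p\<in>frontier \<Omega>. \<exists>r>0. \<exists>k. \<exists>s\<in>{-1, 1::real}. \<exists>g.
        C1_on UNIV g \<and>
        (\<forall>x y. (\<forall>i. i \<noteq> k \<longrightarrow> x $ i = y $ i) \<longrightarrow> g x = g y) \<and>
        \<Omega> \<inter> ball p r = {x\<in>ball p r. s * x $ k < g x})"

end

theory Submission
  imports Defs
begin


lemma lip_interval:
  fixes L G :: "real \<Rightarrow> real"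
  assumes cont: "continuous_on UNIV L" and U: "open U"
    and der: "\<And>t. t \<in> U \<Longrightarrow> (L has_real_derivative G t) (at t)"
    and bd: "\<And>t. t \<in> U \<Longrightarrow> \<bar>G t\<bar> \<le> M"
    and ab: "a \<le> b" and inU: "\<And>t. a < t \<Longrightarrow> t < b \<Longrightarrow> t \<in> U"
  shows "\<bar>L b - L a\<bar> \<le> M * (b - a)"
proof (cases "a = b")
  case True then show ?thesis by simp
next
  case False
  then have lt: "a < b" using ab by simp
  have "\<exists>l z. a < z \<and> z < b \<and> DERIV L z :> l \<and> L b - L a = (b - a) * l"
    by (rule MVT[OF lt]) (use cont continuous_on_subset in \<open>auto intro: der inU real_differentiable_def[THEN iffD2] simp: real_differentiable_def\<close>)
  then obtain l z where z: "a < z" "z < b" "DERIV L z :> l" "L b - L a = (b - a) * l" by blast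
  have "l = G z" using DERIV_unique[OF z(3) der[OF inU[OF z(1,2)]]] .
  then have "\<bar>l\<bar> \<le> M" using bd inU z by auto
  then show ?thesis using z(4) lt by (simp add: abs_mult mult.commute mult_right_mono)
qed

lemma lip1d:
  fixes L G :: "real \<Rightarrow> real"
  assumes cont: "continuous_on UNIV L" and U: "open U"
    and der: "\<And>t. t \<in> U \<Longrightarrow> (L has_real_derivative G t) (at t)"
    and bd: "\<And>t. t \<in> U \<Longrightarrow> \<bar>G t\<bar> \<le> M"
    and zero: "\<And>t. t \<notin> U \<Longrightarrow> L t = 0" and M: "M \<ge> 0"
    and ab: "a \<le> b"
  shows "\<bar>L b - L a\<bar> \<le> M * (b - a)"
proof (cases "\<forall>t. a < t \<and> t < b \<longrightarrow> t \<in> U")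
  case True then show ?thesis using lip_interval[OF cont U der bd ab] by blast
next
  case False
  define C where "C = {a..b} \<inter> - U"
  have Cc: "compact C" unfolding C_def using compact_Int_closed[of "{a..b}" "-U"] U
    by (simp add: closed_Compl)
  have Cne: "C \<noteq> {}" proof - obtain t where "a < t" "t < b" "t \<notin> U" using False by blast then have "t \<in> C" unfolding C_def by auto then show ?thesis by blast qed
  define c1 where "c1 = Inf C"
  define c2 where "c2 = Sup C"
  have c1C: "c1 \<in> C" unfolding c1_def using Cc Cne
    by (simp add: compact_imp_closed compact_imp_bounded closed_contains_Inf bounded_imp_bdd_below)
  have c2C: "c2 \<in> C" unfolding c2_def using Cc Cne
    by (simp add: compact_imp_closed compact_imp_bounded closed_contains_Sup bounded_imp_bdd_above)
  have bddb: "bdd_below C" "bdd_above C" using Cc by (auto simp: compact_imp_bounded bounded_imp_bdd_below bounded_imp_bdd_above)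
  have c12: "c1 \<le> c2" unfolding c1_def c2_def using Cne bddb by (simp add: cInf_le_cSup)
  have r1: "\<bar>L c1 - L a\<bar> \<le> M * (c1 - a)"
  proof (rule lip_interval[OF cont U der bd])
    show "a \<le> c1" using c1C C_def by auto
    fix t assume "a < t" "t < c1"
    moreover have "t \<le> b" using \<open>t < c1\<close> c1C C_def by auto
    moreover have "t \<notin> C" using \<open>t < c1\<close> unfolding c1_def using bddb cInf_lower by fastforce
    ultimately show "t \<in> U" unfolding C_def by auto
  qed auto
  have r2: "\<bar>L b - L c2\<bar> \<le> M * (b - c2)"
  proof (rule lip_interval[OF cont U der bd])
    show "c2 \<le> b" using c2C C_def by auto
    fix t assume "c2 < t" "t < b"
    moreover have "a \<le> t" using \<open>c2 < t\<close> c2C C_def by auto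
    moreover have "t \<notin> C" using \<open>c2 < t\<close> unfolding c2_def using bddb cSup_upper by fastforce
    ultimately show "t \<in> U" unfolding C_def by auto
  qed auto
  have "L c1 = 0" "L c2 = 0" using c1C c2C zero C_def by auto
  moreover have "M * (c2 - c1) \<ge> 0" using M c12 by simp
  moreover have "M*(b-a) = M*(b-c2) + M*(c2-c1) + M*(c1-a)" by (simp add: algebra_simps)
  ultimately show ?thesis using r1 r2 by (auto simp: abs_le_iff)
qed



definition polyf :: "(('n::finite) \<Rightarrow> nat) set \<Rightarrow> (('n \<Rightarrow> nat) \<Rightarrow> real) \<Rightarrow> (('n \<Rightarrow> nat) \<Rightarrow> ('n \<Rightarrow> nat)) \<Rightarrow> real^'n \<Rightarrow> real" where
  "polyf A c e x = (\<Sum>\<alpha>\<in>A. c \<alpha> * (\<Prod>i\<in>UNIV. (x $ i) ^ (e \<alpha> i)))"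

definition dcoef :: "'n \<Rightarrow> (('n \<Rightarrow> nat) \<Rightarrow> real) \<Rightarrow> (('n \<Rightarrow> nat) \<Rightarrow> ('n \<Rightarrow> nat)) \<Rightarrow> ('n \<Rightarrow> nat) \<Rightarrow> real" where
  "dcoef j c e \<alpha> = c \<alpha> * real (e \<alpha> j)"

definition dexp :: "'n \<Rightarrow> (('n \<Rightarrow> nat) \<Rightarrow> ('n \<Rightarrow> nat)) \<Rightarrow> ('n \<Rightarrow> nat) \<Rightarrow> ('n \<Rightarrow> nat)" where
  "dexp j e \<alpha> = (e \<alpha>)(j := e \<alpha> j - 1)"

lemma line_nth: "(x + t *\<^sub>R axis j 1) $ i = x $ i + (if i = j then t else 0)"
  by (simp add: axis_def)

lemma prod_line:
  fixes x :: "real^'n::finite"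
  shows "(\<Prod>i\<in>UNIV. ((x + t *\<^sub>R axis j 1) $ i) ^ (k i)) = (x $ j + t) ^ k j * (\<Prod>i\<in>UNIV-{j}. (x $ i) ^ k i)"
proof -
  have "(\<Prod>i\<in>UNIV. ((x + t *\<^sub>R axis j 1) $ i) ^ (k i)) = ((x + t *\<^sub>R axis j 1) $ j) ^ k j * (\<Prod>i\<in>UNIV-{j}. ((x + t *\<^sub>R axis j 1) $ i) ^ k i)"
    by (subst prod.remove[where x=j]) auto
  also have "(\<Prod>i\<in>UNIV-{j}. ((x + t *\<^sub>R axis j 1) $ i) ^ k i) = (\<Prod>i\<in>UNIV-{j}. (x $ i) ^ k i)"
    by (rule prod.cong) (auto simp: axis_def)
  finally show ?thesis by (simp add: line_nth)
qed

lemma polyf_line: "polyf A c e (x + t *\<^sub>R axis j 1) = (\<Sum>\<alpha>\<in>A. c \<alpha> * ((x $ j + t) ^ e \<alpha> j * (\<Prod>i\<in>UNIV-{j}. (x $ i) ^ e \<alpha> i)))"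
  by (simp only: polyf_def prod_line)

lemma dpolyf_line: "polyf A (dcoef j c e) (dexp j e) (x + t *\<^sub>R axis j 1) = (\<Sum>\<alpha>\<in>A. c \<alpha> * ((real (e \<alpha> j) * (x $ j + t) ^ (e \<alpha> j - 1)) * (\<Prod>i\<in>UNIV-{j}. (x $ i) ^ e \<alpha> i)))"
proof -
  have "\<And>\<alpha>. (\<Prod>i\<in>UNIV-{j}. (x $ i) ^ dexp j e \<alpha> i) = (\<Prod>i\<in>UNIV-{j}. (x $ i) ^ e \<alpha> i)"
    by (rule prod.cong) (auto simp: dexp_def)
  then show ?thesis unfolding polyf_line by (simp add: dcoef_def dexp_def mult_ac)
qed

lemma polyf_deriv_line:
  assumes "finite A"
  shows "((\<lambda>t. polyf A c e (x + t *\<^sub>R axis j 1)) has_real_derivative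
          polyf A (dcoef j c e) (dexp j e) (x + t *\<^sub>R axis j 1)) (at t)"
proof -
  have "((\<lambda>t. (\<Sum>\<alpha>\<in>A. c \<alpha> * ((x $ j + t) ^ e \<alpha> j * (\<Prod>i\<in>UNIV-{j}. (x $ i) ^ e \<alpha> i)))) has_real_derivative
     (\<Sum>\<alpha>\<in>A. c \<alpha> * ((real (e \<alpha> j) * (x $ j + t) ^ (e \<alpha> j - 1)) * (\<Prod>i\<in>UNIV-{j}. (x $ i) ^ e \<alpha> i)))) (at t)"
    using assms by (auto intro!: derivative_eq_intros sum.cong simp: mult_ac)
  then show ?thesis by (simp only: dpolyf_line polyf_line[of A c e])
qed

lemma DERIV_deriv_shift0:
  fixes g :: "real \<Rightarrow> real"
  shows "deriv (\<lambda>s. g (t + s)) 0 = deriv g t"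
  unfolding deriv_def using DERIV_shift[of g _ 0 t] by (simp add: add.commute)

lemma partial_line: "partial j f (x + t *\<^sub>R axis j 1) = deriv (\<lambda>s. f (x + s *\<^sub>R axis j 1)) t"
proof -
  have "partial j f (x + t *\<^sub>R axis j 1) = deriv (\<lambda>s. (\<lambda>s. f (x + s *\<^sub>R axis j 1)) (t + s)) 0"
    unfolding partial_def by (simp add: algebra_simps scaleR_add_left)
  then show ?thesis using DERIV_deriv_shift0[of "\<lambda>s. f (x + s *\<^sub>R axis j 1)" t] by simp
qed

lemma partial_of_deriv:
  assumes "((\<lambda>t. f (x + t *\<^sub>R axis j 1)) has_real_derivative D) (at 0)"
  shows "partial j f x = D"
  unfolding partial_def using assms by (rule DERIV_imp_deriv)

lemma polyf_partial:
  assumes "finite A"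
  shows "partial j (polyf A c e) = polyf A (dcoef j c e) (dexp j e)"
proof
  fix x show "partial j (polyf A c e) x = polyf A (dcoef j c e) (dexp j e) x"
    using partial_of_deriv[OF polyf_deriv_line[OF assms, of c e x j 0]] by simp
qed

lemma polyf_cont: "continuous_on S (polyf A c e)"
  unfolding polyf_def by (intro continuous_intros)



lemma bounded_on_bound:
  fixes f :: "real^'n::finite \<Rightarrow> real"
  assumes "bounded (f ` S)"
  obtains B where "B > 0" "\<And>x. x \<in> S \<Longrightarrow> \<bar>f x\<bar> \<le> B"
  using assms unfolding bounded_pos by auto

lemma integral_zero_dir:
  fixes \<Omega> :: "(real^'n::finite) set" and \<pi> dpi Pj Pjj :: "real^'n \<Rightarrow> real"
  assumes op: "open \<Omega>" and bd: "bounded \<Omega>" and fr: "frontier \<Omega> \<in> null_sets lborel"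
    and cpi: "continuous_on (closure \<Omega>) \<pi>"
    and dpi: "\<And>y t. y + t *\<^sub>R axis j 1 \<in> \<Omega> \<Longrightarrow>
                ((\<lambda>s. \<pi> (y + s *\<^sub>R axis j 1)) has_real_derivative dpi (y + t *\<^sub>R axis j 1)) (at t)"
    and udpi: "uniformly_continuous_on \<Omega> dpi"
    and cPj: "continuous_on UNIV Pj" and cPjj: "continuous_on UNIV Pjj"
    and dPj: "\<And>y t. ((\<lambda>s. Pj (y + s *\<^sub>R axis j 1)) has_real_derivative Pjj (y + t *\<^sub>R axis j 1)) (at t)"
    and bdry: "\<And>x. x \<in> frontier \<Omega> \<Longrightarrow> \<pi> x * Pj x = 0"
  shows "set_integrable lborel \<Omega> (\<lambda>x. dpi x * Pj x + \<pi> x * Pjj x)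
       \<and> (LINT x:\<Omega>|lborel. dpi x * Pj x + \<pi> x * Pjj x) = 0"
proof -
  define e :: "real^'n" where "e = axis j 1"
  define g where "g = (\<lambda>x. dpi x * Pj x + \<pi> x * Pjj x)"
  have cc: "compact (closure \<Omega>)" using bd by simp
  obtain B1 where B1: "B1 > 0" "\<And>x. x \<in> \<Omega> \<Longrightarrow> \<bar>dpi x\<bar> \<le> B1"
    using bounded_uniformly_continuous_image[OF udpi bd] bounded_on_bound by blast
  obtain B2 where B2: "B2 > 0" "\<And>x. x \<in> closure \<Omega> \<Longrightarrow> \<bar>Pj x\<bar> \<le> B2"
    using compact_imp_bounded[OF compact_continuous_image[OF continuous_on_subset[OF cPj] cc]] bounded_on_bound by blast
  obtain B3 where B3: "B3 > 0" "\<And>x. x \<in> closure \<Omega> \<Longrightarrow> \<bar>\<pi> x\<bar> \<le> B3"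
    using compact_imp_bounded[OF compact_continuous_image[OF cpi cc]] bounded_on_bound by blast
  obtain B4 where B4: "B4 > 0" "\<And>x. x \<in> closure \<Omega> \<Longrightarrow> \<bar>Pjj x\<bar> \<le> B4"
    using compact_imp_bounded[OF compact_continuous_image[OF continuous_on_subset[OF cPjj] cc]] bounded_on_bound by blast
  define M where "M = B1 * B2 + B3 * B4"
  have M0: "M \<ge> 0" unfolding M_def using B1 B2 B3 B4 by simp
  have gM: "\<bar>g x\<bar> \<le> M" if "x \<in> \<Omega>" for x
  proof -
    have xc: "x \<in> closure \<Omega>" using that closure_subset by blast
    have "\<bar>g x\<bar> \<le> \<bar>dpi x\<bar> * \<bar>Pj x\<bar> + \<bar>\<pi> x\<bar> * \<bar>Pjj x\<bar>" unfolding g_def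
      by (metis abs_mult abs_triangle_ineq)
    also have "\<dots> \<le> B1 * B2 + B3 * B4"
      by (intro add_mono mult_mono B1 B2 B3 B4 xc that) (use B1 B3 in auto)
    finally show ?thesis unfolding M_def .
  qed
  define Ft where "Ft = (\<lambda>y. if y \<in> closure \<Omega> then \<pi> y * Pj y else 0)"
  have Ft0: "Ft y = 0" if "y \<notin> \<Omega>" for y
    using that bdry unfolding Ft_def frontier_def interior_open[OF op] by auto
  have cFt: "continuous_on UNIV Ft"
  proof -
    have "continuous_on (closure \<Omega> \<union> -\<Omega>) Ft"
    proof (rule continuous_on_closed_Un)
      show "continuous_on (closure \<Omega>) Ft"
        using continuous_on_mult[OF cpi continuous_on_subset[OF cPj]] by (rule continuous_on_cong[THEN iffD1, rotated 2]) (auto simp: Ft_def)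
      show "continuous_on (-\<Omega>) Ft"
        by (rule continuous_on_cong[THEN iffD1, OF refl _ continuous_on_const[of _ 0]]) (use Ft0 in auto)
    qed (use op in auto)
    moreover have "closure \<Omega> \<union> -\<Omega> = UNIV" using closure_subset by auto
    ultimately show ?thesis by simp
  qed
  have contline: "continuous_on UNIV (\<lambda>s. Ft (y + s *\<^sub>R e))" for y
    by (rule continuous_on_compose2[OF cFt]) (auto intro!: continuous_intros)
  have openU: "open {s. y + s *\<^sub>R e \<in> \<Omega>}" for y
  proof -
    have "{s. y + s *\<^sub>R e \<in> \<Omega>} = (\<lambda>s. y + s *\<^sub>R e) -` \<Omega>" by auto
    then show ?thesis using continuous_open_vimage[OF op, of "\<lambda>s. y + s *\<^sub>R e"]
      by (auto intro!: continuous_intros)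
  qed
  have derFt: "((\<lambda>s. Ft (y + s *\<^sub>R e)) has_real_derivative g (y + t *\<^sub>R e)) (at t)"
    if "y + t *\<^sub>R e \<in> \<Omega>" for y t
  proof -
    have "((\<lambda>s. \<pi> (y + s *\<^sub>R e) * Pj (y + s *\<^sub>R e)) has_real_derivative g (y + t *\<^sub>R e)) (at t)"
      unfolding g_def using DERIV_mult[OF dpi[OF that[unfolded e_def]] dPj[of y t]] by (simp add: e_def mult.commute)
    then show ?thesis
      by (rule has_field_derivative_transform_within_open[OF _ openU[of y]])
         (use that closure_subset in \<open>auto simp: Ft_def\<close>)
  qed
  have lip: "\<bar>Ft (y + h *\<^sub>R e) - Ft y\<bar> \<le> M * \<bar>h\<bar>" for y h
  proof -
    have L: "\<bar>Ft (y + b *\<^sub>R e) - Ft (y + a *\<^sub>R e)\<bar> \<le> M * (b - a)" if "a \<le> b" for a b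
      by (rule lip1d[OF contline openU[of y], where G="\<lambda>s. g (y + s *\<^sub>R e)"])
         (use derFt gM Ft0 M0 that in auto)
    show ?thesis
    proof (cases "h \<ge> 0")
      case True then show ?thesis using L[of 0 h] by simp
    next
      case False then show ?thesis using L[of h 0] by (simp add: abs_minus_commute)
    qed
  qed
  obtain R where R: "R \<ge> 0" "closure \<Omega> \<subseteq> cball 0 R"
    using bd bounded_closure bounded_subset_cball by (metis bounded_pos less_eq_real_def mem_cball_0 subsetI)
  define hs :: "nat \<Rightarrow> real" where "hs = (\<lambda>n. inverse (real (Suc n)))"
  have hs0: "hs n > 0" "hs n \<le> 1" for n unfolding hs_def by (auto simp: field_simps)
  define s where "s = (\<lambda>n y. (Ft (y + hs n *\<^sub>R e) - Ft y) / hs n)"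
  define f where "f = (\<lambda>y. indicator \<Omega> y *\<^sub>R g y)"
  define K where "K = cball (0::real^'n) (R + 1)"
  define w where "w = (\<lambda>y. M * indicator K y)"
  have cg: "continuous_on \<Omega> g"
  proof -
    have "continuous_on \<Omega> \<pi>" using cpi closure_subset continuous_on_subset by blast
    then show ?thesis unfolding g_def using uniformly_continuous_imp_continuous[OF udpi]
      by (intro continuous_intros continuous_on_subset[OF cPj] continuous_on_subset[OF cPjj]) auto
  qed
  have fm: "f \<in> borel_measurable lborel"
    unfolding f_def using borel_measurable_continuous_on_indicator[OF _ cg] op by simp
  have sm: "s n \<in> borel_measurable lborel" for n
    unfolding s_def measurable_lborel2 by (rule borel_measurable_continuous_onI)
      (use hs0(1)[of n] in \<open>auto intro!: continuous_intros continuous_on_compose2[OF cFt]\<close>)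
  have wi: "integrable lborel w"
    unfolding w_def K_def by (intro integrable_mult_right integrable_real_indicator) (use emeasure_bounded_finite[OF bounded_cball] in auto)
  have bound: "AE y in lborel. norm (s n y) \<le> w y" for n
  proof (rule AE_I2)
    fix y :: "real^'n"
    show "norm (s n y) \<le> w y"
    proof (cases "y \<in> K")
      case True
      have "\<bar>s n y\<bar> = \<bar>Ft (y + hs n *\<^sub>R e) - Ft y\<bar> / hs n" unfolding s_def using hs0[of n] by simp
      also have "\<dots> \<le> M * hs n / hs n" using lip[of y "hs n"] hs0[of n] by (intro divide_right_mono) auto
      also have "\<dots> = M" using hs0[of n] by simp
      finally show ?thesis using True unfolding w_def by simp
    next
      case False
      then have ny: "norm y > R + 1" unfolding K_def by simp
      have "norm (y + hs n *\<^sub>R e) \<ge> norm y - hs n" using norm_diff_ineq[of y "hs n *\<^sub>R e"] hs0[of n]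
        by (simp add: e_def)
      then have "norm (y + hs n *\<^sub>R e) > R" using ny hs0[of n] by simp
      then have "y + hs n *\<^sub>R e \<notin> closure \<Omega>" "y \<notin> closure \<Omega>" using R ny by auto
      then have "s n y = 0" unfolding s_def Ft_def by simp
      then show ?thesis using False unfolding w_def by simp
    qed
  qed
  have hslim: "filterlim hs (at 0) sequentially"
    unfolding filterlim_at hs_def using LIMSEQ_inverse_real_of_nat by auto
  have lim: "AE y in lborel. (\<lambda>n. s n y) \<longlonglongrightarrow> f y"
  proof (rule AE_I'[OF fr], safe)
    fix y assume yfr: "y \<in> space lborel" "\<not> (\<lambda>n. s n y) \<longlonglongrightarrow> f y"
    show "y \<in> frontier \<Omega>"
    proof (rule ccontr)
      assume nfr: "y \<notin> frontier \<Omega>"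
      show False
      proof (cases "y \<in> \<Omega>")
        case True
        have "((\<lambda>s. Ft (y + s *\<^sub>R e)) has_real_derivative g y) (at 0)" using derFt[of y 0] True by simp
        then have "((\<lambda>h. (Ft (y + (0 + h) *\<^sub>R e) - Ft (y + 0 *\<^sub>R e)) / h) \<longlongrightarrow> g y) (at 0)"
          by (simp add: DERIV_def)
        then have "((\<lambda>h. (Ft (y + h *\<^sub>R e) - Ft y) / h) \<longlongrightarrow> g y) (at 0)" by simp
        from filterlim_compose[OF this hslim] have "(\<lambda>n. s n y) \<longlonglongrightarrow> g y"
          unfolding s_def by (simp add: o_def)
        then show False using yfr True unfolding f_def by simp
      next
        case False
        then have yc: "y \<notin> closure \<Omega>" using nfr unfolding frontier_def interior_open[OF op] by auto
        have h0: "hs \<longlonglongrightarrow> 0" using hslim unfolding filterlim_at by auto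
        have "(\<lambda>n. y + hs n *\<^sub>R e) \<longlonglongrightarrow> y + 0 *\<^sub>R e"
          by (intro tendsto_intros h0)
        then have "eventually (\<lambda>n. y + hs n *\<^sub>R e \<in> - closure \<Omega>) sequentially"
          using yc by (intro topological_tendstoD) auto
        then have "eventually (\<lambda>n. s n y = 0) sequentially"
          by eventually_elim (use yc in \<open>auto simp: s_def Ft_def\<close>)
        then have "(\<lambda>n. s n y) \<longlonglongrightarrow> 0" by (rule tendsto_eventually)
        then show False using yfr False unfolding f_def by simp
      qed
    qed
  qed
  have fi: "integrable lborel f"
    by (rule integrable_dominated_convergence[OF fm sm wi lim bound])
  have conv: "(\<lambda>n. integral\<^sup>L lborel (s n)) \<longlonglongrightarrow> integral\<^sup>L lborel f"
    by (rule integral_dominated_convergence[OF fm sm wi lim bound])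
  have Ftm: "Ft \<in> borel_measurable borel" using cFt by (rule borel_measurable_continuous_onI)
  have Fti1: "integrable lborel (\<lambda>y. (B3 * B2) * indicator (cball (0::real^'n) R) y)"
    by (intro integrable_mult_right integrable_real_indicator) (use emeasure_bounded_finite[OF bounded_cball] in auto)
  have Fti2: "Ft \<in> borel_measurable lborel" using Ftm by simp
  have Fti3: "AE x in lborel. norm (Ft x) \<le> norm (B3 * B2 * indicator (cball (0::real^'n) R) x)"
  proof (rule AE_I2)
    fix x :: "real^'n"
    show "norm (Ft x) \<le> norm (B3 * B2 * indicator (cball 0 R) x)"
    proof (cases "x \<in> closure \<Omega>")
      case True
      then have "\<bar>\<pi> x * Pj x\<bar> \<le> B3 * B2" unfolding abs_mult
        using B2 B3 by (intro mult_mono) auto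
      then show ?thesis using True R B2 B3 by (auto simp: Ft_def)
    qed (auto simp: Ft_def)
  qed
  have Fti: "integrable lborel Ft" by (rule Bochner_Integration.integrable_bound[OF Fti1 Fti2 Fti3])
  have trans: "integrable lborel (\<lambda>y. Ft (c + y)) \<and> integral\<^sup>L lborel (\<lambda>y. Ft (c + y)) = integral\<^sup>L lborel Ft" for c :: "real^'n"
  proof -
    have m: "(+) c \<in> measurable lborel borel" by simp
    show ?thesis
      using integral_distr[OF m Ftm] integrable_distr_eq[OF m Ftm] Fti lborel_distr_plus[of c] by simp
  qed
  have s0: "integral\<^sup>L lborel (s n) = 0" for n
  proof -
    have i1: "integrable lborel (\<lambda>y. Ft (hs n *\<^sub>R e + y))" using trans by blast
    have "integral\<^sup>L lborel (s n) = integral\<^sup>L lborel (\<lambda>y. Ft (hs n *\<^sub>R e + y) - Ft y) / hs n"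
      unfolding s_def by (simp add: add.commute)
    also have "\<dots> = 0" using i1 Fti trans[of "hs n *\<^sub>R e"] by simp
    finally show ?thesis .
  qed
  have "integral\<^sup>L lborel f = 0"
    using conv unfolding s0 by (simp add: LIMSEQ_const_iff)
  then show ?thesis using fi unfolding set_integrable_def set_lebesgue_integral_def f_def g_def by simp
qed



lemma graph_negligible:
  fixes g :: "real^'n::finite \<Rightarrow> real"
  assumes C1: "C1_on UNIV g" and ind: "\<forall>x y. (\<forall>i. i \<noteq> k \<longrightarrow> x $ i = y $ i) \<longrightarrow> g x = g y"
    and s: "s \<in> {-1, 1::real}"
  shows "negligible {x. s * x $ k = g x}"
proof -
  define H where "H = {y::real^'n. axis k 1 \<bullet> y = 0}"
  have nH: "negligible H" unfolding H_def by (rule negligible_hyperplane) simp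
  define F where "F = (\<lambda>y::real^'n. y + (s * g y) *\<^sub>R axis k 1)"
  from C1 obtain g' where g': "\<And>x. (g has_derivative g' x) (at x)" unfolding C1_on_def by blast
  have dF: "F differentiable_on H"
  proof (rule differentiable_at_imp_differentiable_on)
    fix x
    have dg: "g differentiable at x" using g' differentiable_def by blast
    show "F differentiable at x" unfolding F_def
      by (intro differentiable_add differentiable_ident differentiable_scaleR differentiable_mult differentiable_const dg)
  qed
  have "{x. s * x $ k = g x} \<subseteq> F ` H"
  proof
    fix x :: "real^'n" assume x: "x \<in> {x. s * x $ k = g x}"
    define y where "y = x - (x $ k) *\<^sub>R axis k 1"
    have yk: "y $ k = 0" unfolding y_def by (simp add: axis_def)
    have "g y = g x" using ind unfolding y_def by (auto simp: axis_def)
    moreover have "s * s = 1" using s by auto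
    moreover have "x $ k = s * g x"
    proof -
      have "s * x $ k = g x" using x by simp
      then have "s * (s * x $ k) = s * g x" by simp
      then show ?thesis using \<open>s * s = 1\<close> by (simp add: mult.assoc[symmetric])
    qed
    ultimately have "F y = x" unfolding F_def y_def by simp
    moreover have "y \<in> H" unfolding H_def using yk by (simp add: inner_axis')
    ultimately show "x \<in> F ` H" by blast
  qed
  then show ?thesis
    using negligible_subset[OF negligible_differentiable_image_negligible[OF order_refl nH dF]] by blast
qed

lemma frontier_local_negligible:
  fixes \<Omega> :: "(real^'n::finite) set"
  assumes "open \<Omega>" "regular_boundary \<Omega>" "p \<in> frontier \<Omega>"
  shows "\<exists>r>0. negligible (frontier \<Omega> \<inter> ball p r)"
proof -
  obtain r k s g where r: "r > 0" "s \<in> {-1, 1::real}" "C1_on UNIV g"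
    "\<forall>x y. (\<forall>i. i \<noteq> k \<longrightarrow> x $ i = y $ i) \<longrightarrow> g x = g y"
    "\<Omega> \<inter> ball p r = {x\<in>ball p r. s * x $ k < g x}"
  proof -
    have "\<exists>r>0. \<exists>k. \<exists>s\<in>{-1, 1::real}. \<exists>g.
        C1_on UNIV g \<and>
        (\<forall>x y. (\<forall>i. i \<noteq> k \<longrightarrow> x $ i = y $ i) \<longrightarrow> g x = g y) \<and>
        \<Omega> \<inter> ball p r = {x\<in>ball p r. s * x $ k < g x}"
      using bspec[OF assms(2)[unfolded regular_boundary_def] assms(3)] .
    then show ?thesis using that by blast
  qed
  from r(3) obtain g' where g': "\<And>x. (g has_derivative g' x) (at x)" unfolding C1_on_def by blast
  have cg: "continuous_on UNIV g" using g'
    by (intro continuous_at_imp_continuous_on ballI has_derivative_continuous[OF g'])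
  have cl: "closed {x::real^'n. s * x $ k \<le> g x}"
    by (rule closed_Collect_le) (auto intro!: continuous_intros cg)
  have "frontier \<Omega> \<inter> ball p r \<subseteq> {x. s * x $ k = g x}"
  proof
    fix z assume z: "z \<in> frontier \<Omega> \<inter> ball p r"
    have zn: "z \<notin> \<Omega>" using z assms(1) by (simp add: frontier_def interior_open)
    have "z \<in> ball p r \<inter> closure \<Omega>" using z by (simp add: frontier_def)
    then have "z \<in> closure (ball p r \<inter> \<Omega>)" using open_Int_closure_subset[of "ball p r" \<Omega>] by auto
    moreover have "ball p r \<inter> \<Omega> \<subseteq> {x. s * x $ k \<le> g x}"
    proof
      fix x assume "x \<in> ball p r \<inter> \<Omega>"
      then have "x \<in> {x\<in>ball p r. s * x $ k < g x}" using r(5) by (simp add: Int_commute)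
      then show "x \<in> {x. s * x $ k \<le> g x}" by simp
    qed
    ultimately have "s * z $ k \<le> g z" using closure_minimal[OF _ cl] by blast
    moreover have "\<not> s * z $ k < g z"
    proof
      assume "s * z $ k < g z"
      then have "z \<in> {x\<in>ball p r. s * x $ k < g x}" using z by simp
      then have "z \<in> \<Omega>" using r(5) by blast
      then show False using zn by simp
    qed
    ultimately show "z \<in> {x. s * x $ k = g x}" by auto
  qed
  then show ?thesis using r(1) graph_negligible[OF r(3) r(4) r(2)] negligible_subset by blast
qed

lemma frontier_negligible:
  fixes \<Omega> :: "(real^'n::finite) set"
  assumes "open \<Omega>" "bounded \<Omega>" "regular_boundary \<Omega>"
  shows "negligible (frontier \<Omega>)"
proof -
  have "\<forall>p\<in>frontier \<Omega>. \<exists>r>0. negligible (frontier \<Omega> \<inter> ball p r)"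
    using frontier_local_negligible[OF assms(1,3)] by blast
  then obtain R where R: "\<And>p. p \<in> frontier \<Omega> \<Longrightarrow> R p > 0 \<and> negligible (frontier \<Omega> \<inter> ball p (R p))"
    by metis
  have cpt: "compact (frontier \<Omega>)" using assms(2) by auto
  have "frontier \<Omega> \<subseteq> (\<Union>p\<in>frontier \<Omega>. ball p (R p))" using R by auto
  then obtain C where C: "C \<subseteq> frontier \<Omega>" "finite C" "frontier \<Omega> \<subseteq> (\<Union>p\<in>C. ball p (R p))"
    using compactE_image[OF cpt, of "frontier \<Omega>" "\<lambda>p. ball p (R p)"] by auto
  have "frontier \<Omega> = (\<Union>p\<in>C. frontier \<Omega> \<inter> ball p (R p))" using C(3) by auto
  moreover have "negligible (\<Union>p\<in>C. frontier \<Omega> \<inter> ball p (R p))"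
    using C R by (intro negligible_Union) auto
  ultimately show ?thesis by simp
qed

lemma frontier_null:
  fixes \<Omega> :: "(real^'n::finite) set"
  assumes "open \<Omega>" "bounded \<Omega>" "regular_boundary \<Omega>"
  shows "frontier \<Omega> \<in> null_sets lborel"
proof -
  have "frontier \<Omega> \<in> null_sets lebesgue" using frontier_negligible[OF assms] negligible_iff_null_sets by blast
  moreover have "frontier \<Omega> \<in> sets borel" by auto
  ultimately show ?thesis using null_sets_completion_iff[of "frontier \<Omega>" lborel] by simp
qed



lemma ham_alg:
  fixes s pix P0 :: real and Pjj Pj qd Q2 dp :: "'n::finite \<Rightarrow> real"
  assumes s: "s > 0" and pix: "pix = s * s" and qd: "\<And>j. qd j * s = dp j / 2"
  shows "(-(1/2) * (\<Sum>j\<in>UNIV. Pjj j * s + Pj j * qd j + (Pj j * qd j + P0 * Q2 j))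
          + (\<Sum>j\<in>UNIV. Q2 j) / (2 * s) * (P0 * s)) * s
        = -(1/2) * (\<Sum>j\<in>UNIV. dp j * Pj j + pix * Pjj j)"
proof -
  have e1: "(\<Sum>j\<in>UNIV. Pjj j * s + Pj j * qd j + (Pj j * qd j + P0 * Q2 j)) * s
      = (\<Sum>j\<in>UNIV. dp j * Pj j + pix * Pjj j) + P0 * s * (\<Sum>j\<in>UNIV. Q2 j)"
  proof -
    have "(\<Sum>j\<in>UNIV. Pjj j * s + Pj j * qd j + (Pj j * qd j + P0 * Q2 j)) * s
        = (\<Sum>j\<in>UNIV. (dp j * Pj j + pix * Pjj j) + P0 * s * Q2 j)"
      unfolding sum_distrib_right
    proof (rule sum.cong[OF refl])
      fix j
      have "Pj j * qd j * s = Pj j * (dp j / 2)" using qd[of j] by (simp add: mult.assoc)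
      then show "(Pjj j * s + Pj j * qd j + (Pj j * qd j + P0 * Q2 j)) * s = dp j * Pj j + pix * Pjj j + P0 * s * Q2 j"
        unfolding pix by (simp add: algebra_simps)
    qed
    then show ?thesis by (simp add: sum.distrib sum_distrib_left)
  qed
  have e2: "(\<Sum>j\<in>UNIV. Q2 j) / (2 * s) * (P0 * s) * s = P0 * s * (\<Sum>j\<in>UNIV. Q2 j) / 2"
    using s by (simp add: field_simps)
  show ?thesis unfolding distrib_right e2 using e1 by (simp add: algebra_simps)
qed



lemma dir_deriv:
  assumes "(f has_derivative F) (at (y + t *\<^sub>R v))"
  shows "((\<lambda>s. f (y + s *\<^sub>R v)) has_real_derivative F v) (at t)"
proof -
  have lin: "linear F" using assms has_derivative_linear by blast
  have "((\<lambda>s. y + s *\<^sub>R v) has_derivative (\<lambda>s. s *\<^sub>R v)) (at t)"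
    by (auto intro!: derivative_eq_intros)
  from has_derivative_compose[OF this assms] have
    "((\<lambda>s. f (y + s *\<^sub>R v)) has_derivative (\<lambda>s. F (s *\<^sub>R v))) (at t)" .
  moreover have "(\<lambda>s. F (s *\<^sub>R v)) = (*) (F v)"
    using linear_scale[OF lin] by (auto simp: mult.commute)
  ultimately show ?thesis unfolding has_field_derivative_def by simp
qed

lemma open_line: fixes y v :: "'a::real_normed_vector" assumes op: "open \<Omega>" shows "open {s::real. y + s *\<^sub>R v \<in> \<Omega>}"
proof -
  have "{s. y + s *\<^sub>R v \<in> \<Omega>} = (\<lambda>s. y + s *\<^sub>R v) -` \<Omega>" by auto
  moreover have "open ((\<lambda>s. y + s *\<^sub>R v) -` \<Omega>)"
    by (rule continuous_open_vimage[OF op]) (auto intro!: continuous_intros)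
  ultimately show ?thesis by simp
qed

theorem proposition1:
  fixes \<Omega> :: "(real^'n) set" and \<pi> P :: "real^'n \<Rightarrow> real"
  assumes "open \<Omega>" and "bounded \<Omega>" and "regular_boundary \<Omega>"
    and "\<forall>x\<in>\<Omega>. \<pi> x > 0"
    and "set_integrable lborel \<Omega> \<pi>" and "(LINT x:\<Omega>|lborel. \<pi> x) = 1"
    and "C2_on \<Omega> \<pi>"
    and "continuous_on (closure \<Omega>) \<pi>"
    and "\<forall>i. uniformly_continuous_on \<Omega> (partial i \<pi>)"
    and "\<forall>i j. uniformly_continuous_on \<Omega> (partial i (partial j \<pi>))"
    and "is_polynomial P"
    and "\<forall>x\<in>frontier \<Omega>. \<forall>j. \<pi> x * partial j P x = 0"
  shows "set_integrable lborel \<Omega>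
           (\<lambda>x. hamiltonian \<pi> (\<lambda>y. P y * sqrt (\<pi> y)) x * sqrt (\<pi> x))
       \<and> (LINT x:\<Omega>|lborel. hamiltonian \<pi> (\<lambda>y. P y * sqrt (\<pi> y)) x * sqrt (\<pi> x)) = 0
       \<and> (\<forall>f. set_integrable lborel \<Omega> (\<lambda>x. f x * \<pi> x) \<longrightarrow>
            set_integrable lborel \<Omega>
              (\<lambda>x. (f x + hamiltonian \<pi> (\<lambda>y. P y * sqrt (\<pi> y)) x / sqrt (\<pi> x)) * \<pi> x)
          \<and> (LINT x:\<Omega>|lborel.
               (f x + hamiltonian \<pi> (\<lambda>y. P y * sqrt (\<pi> y)) x / sqrt (\<pi> x)) * \<pi> x)
            = (LINT x:\<Omega>|lborel. f x * \<pi> x))"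
proof -
  note op = assms(1) and bd = assms(2) and rb = assms(3) and pos = assms(4)
    and C2 = assms(7) and cpi = assms(8) and ucd1 = assms(9) and poly = assms(11) and bdry = assms(12)
  obtain f' f'' where f1: "\<forall>x\<in>\<Omega>. (\<pi> has_derivative f' x) (at x)"
    and f2: "\<forall>x\<in>\<Omega>. \<forall>v. ((\<lambda>y. f' y v) has_derivative f'' x v) (at x)"
    using C2 unfolding C2_on_def by blast
  obtain A c where A: "finite A" "\<forall>x. P x = (\<Sum>\<alpha>\<in>A. c \<alpha> * (\<Prod>j\<in>UNIV. (x $ j) ^ (\<alpha> j)))"
    using poly unfolding is_polynomial_def by blast
  define E where "E = (\<lambda>\<alpha>::'n\<Rightarrow>nat. \<alpha>)"
  have Peq: "P = polyf A c E" unfolding E_def polyf_def using A(2) by auto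
  define Pj where "Pj j = polyf A (dcoef j c E) (dexp j E)" for j
  define Pjj where "Pjj j = polyf A (dcoef j (dcoef j c E) (dexp j E)) (dexp j (dexp j E))" for j
  have pP: "partial j P = Pj j" for j unfolding Peq Pj_def by (rule polyf_partial[OF A(1)])
  have dP: "((\<lambda>s. P (y + s *\<^sub>R axis j 1)) has_real_derivative Pj j (y + t *\<^sub>R axis j 1)) (at t)" for y t j
    unfolding Peq Pj_def by (rule polyf_deriv_line[OF A(1)])
  have dPj: "((\<lambda>s. Pj j (y + s *\<^sub>R axis j 1)) has_real_derivative Pjj j (y + t *\<^sub>R axis j 1)) (at t)" for y t j
    unfolding Pj_def Pjj_def by (rule polyf_deriv_line[OF A(1)])
  have cPj: "continuous_on UNIV (Pj j)" for j unfolding Pj_def by (rule polyf_cont)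
  have cPjj: "continuous_on UNIV (Pjj j)" for j unfolding Pjj_def by (rule polyf_cont)
  have dpi: "((\<lambda>s. \<pi> (y + s *\<^sub>R axis j 1)) has_real_derivative f' (y + t *\<^sub>R axis j 1) (axis j 1)) (at t)"
    if "y + t *\<^sub>R axis j 1 \<in> \<Omega>" for y t j
    using dir_deriv[of \<pi> "f' (y + t *\<^sub>R axis j 1)" y t "axis j 1"] f1 that by blast
  have ppi: "partial j \<pi> z = f' z (axis j 1)" if "z \<in> \<Omega>" for z j
    using partial_of_deriv[OF dpi[of z 0 j]] that by simp
  have dpi': "((\<lambda>s. \<pi> (y + s *\<^sub>R axis j 1)) has_real_derivative partial j \<pi> (y + t *\<^sub>R axis j 1)) (at t)"
    if "y + t *\<^sub>R axis j 1 \<in> \<Omega>" for y t j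
    using dpi[OF that] ppi[OF that] by simp
  have frn: "frontier \<Omega> \<in> null_sets lborel" by (rule frontier_null[OF op bd rb])
  define gj where "gj j x = partial j \<pi> x * Pj j x + \<pi> x * Pjj j x" for j x
  have Ij: "set_integrable lborel \<Omega> (gj j) \<and> (LINT x:\<Omega>|lborel. gj j x) = 0" for j
    unfolding gj_def
    by (rule integral_zero_dir[OF op bd frn cpi dpi' ucd1[rule_format] cPj cPjj dPj])
       (use bdry pP in auto)
  define q where "q = (\<lambda>y. sqrt (\<pi> y))"
  define \<psi> where "\<psi> = (\<lambda>y. P y * sqrt (\<pi> y))"
  define qd where "qd j z = partial j \<pi> z / (2 * sqrt (\<pi> z))" for j z
  have dq: "((\<lambda>s. q (y + s *\<^sub>R axis j 1)) has_real_derivative qd j (y + t *\<^sub>R axis j 1)) (at t)"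
    if "y + t *\<^sub>R axis j 1 \<in> \<Omega>" for y t j
  proof -
    let ?z = "y + t *\<^sub>R axis j 1"
    have pz: "\<pi> ?z > 0" using pos that by auto
    have "((\<lambda>s. sqrt (\<pi> (y + s *\<^sub>R axis j 1))) has_real_derivative inverse (sqrt (\<pi> ?z)) / 2 * partial j \<pi> ?z) (at t)"
      by (rule DERIV_chain2[OF DERIV_real_sqrt[OF pz] dpi'[OF that]])
    then show ?thesis unfolding q_def qd_def by (simp add: field_simps)
  qed
  have pq: "partial j q z = qd j z" if "z \<in> \<Omega>" for j z
    using partial_of_deriv[OF dq[of z 0 j]] that by simp
  have dpsi: "((\<lambda>s. \<psi> (y + s *\<^sub>R axis j 1)) has_real_derivative
       Pj j (y + t *\<^sub>R axis j 1) * q (y + t *\<^sub>R axis j 1) + P (y + t *\<^sub>R axis j 1) * qd j (y + t *\<^sub>R axis j 1)) (at t)"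
    if "y + t *\<^sub>R axis j 1 \<in> \<Omega>" for y t j
    using DERIV_mult'[OF dP[of y j t] dq[OF that]] unfolding \<psi>_def q_def by (simp add: algebra_simps)
  have ppsi: "partial j \<psi> z = Pj j z * q z + P z * qd j z" if "z \<in> \<Omega>" for j z
    using partial_of_deriv[OF dpsi[of z 0 j]] that by simp
  have ident: "hamiltonian \<pi> \<psi> x * sqrt (\<pi> x) = -(1/2) * (\<Sum>j\<in>UNIV. gj j x)" if x: "x \<in> \<Omega>" for x
  proof -
    have S: "open {s. x + s *\<^sub>R axis j 1 \<in> \<Omega>}" "0 \<in> {s. x + s *\<^sub>R axis j 1 \<in> \<Omega>}" for j
      using open_line[OF op] x by auto
    have Q2ex: "\<exists>Q. ((\<lambda>s. qd j (x + s *\<^sub>R axis j 1)) has_real_derivative Q) (at 0)" for j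
    proof -
      have n1: "((\<lambda>s. f' (x + s *\<^sub>R axis j 1) (axis j 1)) has_real_derivative f'' x (axis j 1) (axis j 1)) (at 0)"
        using dir_deriv[of "\<lambda>y. f' y (axis j 1)" "f'' x (axis j 1)" x 0 "axis j 1"] f2 x by simp
      have n2: "((\<lambda>s. partial j \<pi> (x + s *\<^sub>R axis j 1)) has_real_derivative f'' x (axis j 1) (axis j 1)) (at 0)"
        by (rule has_field_derivative_transform_within_open[OF n1 S(1)[of j] S(2)[of j]]) (use ppi in auto)
      have d2: "((\<lambda>s. 2 * q (x + s *\<^sub>R axis j 1)) has_real_derivative 2 * qd j x) (at 0)"
        using DERIV_cmult[OF dq[of x 0 j], of 2] x by simp
      have ne: "2 * q (x + 0 *\<^sub>R axis j 1) \<noteq> 0" using pos x unfolding q_def by auto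
      from DERIV_divide[OF n2 d2 ne] show ?thesis unfolding qd_def q_def by blast
    qed
    then obtain Q2 where Q2: "\<And>j. ((\<lambda>s. qd j (x + s *\<^sub>R axis j 1)) has_real_derivative Q2 j) (at 0)"
      by metis
    have hq2: "partial j (partial j q) x = Q2 j" for j
    proof (rule partial_of_deriv)
      show "((\<lambda>s. partial j q (x + s *\<^sub>R axis j 1)) has_real_derivative Q2 j) (at 0)"
        by (rule has_field_derivative_transform_within_open[OF Q2 S(1)[of j] S(2)[of j]]) (use pq in auto)
    qed
    have hpsi2: "partial j (partial j \<psi>) x = Pjj j x * q x + Pj j x * qd j x + (Pj j x * qd j x + P x * Q2 j)" for j
    proof (rule partial_of_deriv)
      have "((\<lambda>s. Pj j (x + s *\<^sub>R axis j 1) * q (x + s *\<^sub>R axis j 1) + P (x + s *\<^sub>R axis j 1) * qd j (x + s *\<^sub>R axis j 1))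
          has_real_derivative Pjj j x * q x + Pj j x * qd j x + (Pj j x * qd j x + P x * Q2 j)) (at 0)"
        using DERIV_add[OF DERIV_mult'[OF dPj[of j x 0] dq[of x 0 j]] DERIV_mult'[OF dP[of x j 0] Q2[of j]]] x
        by (simp add: algebra_simps)
      then show "((\<lambda>s. partial j \<psi> (x + s *\<^sub>R axis j 1)) has_real_derivative Pjj j x * q x + Pj j x * qd j x + (Pj j x * qd j x + P x * Q2 j)) (at 0)"
        by (rule has_field_derivative_transform_within_open[OF _ S(1)[of j] S(2)[of j]]) (use ppsi in auto)
    qed
    have sp: "sqrt (\<pi> x) > 0" using pos x by auto
    have "hamiltonian \<pi> \<psi> x * sqrt (\<pi> x) =
       (-(1/2) * (\<Sum>j\<in>UNIV. Pjj j x * sqrt (\<pi> x) + Pj j x * qd j x + (Pj j x * qd j x + P x * Q2 j))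
          + (\<Sum>j\<in>UNIV. Q2 j) / (2 * sqrt (\<pi> x)) * (P x * sqrt (\<pi> x))) * sqrt (\<pi> x)"
      unfolding hamiltonian_def potential_def laplacian_def hpsi2 hq2[unfolded q_def]
      by (simp add: \<psi>_def q_def)
    also have "\<dots> = -(1/2) * (\<Sum>j\<in>UNIV. partial j \<pi> x * Pj j x + \<pi> x * Pjj j x)"
      by (rule ham_alg[OF sp]) (use pos x in \<open>auto simp: qd_def\<close>)
    finally show ?thesis unfolding gj_def .
  qed
  define Hs where "Hs x = hamiltonian \<pi> \<psi> x * sqrt (\<pi> x)" for x
  have eqH: "(\<lambda>x. indicator \<Omega> x *\<^sub>R Hs x) = (\<lambda>x. -(1/2) * (\<Sum>j\<in>UNIV. indicator \<Omega> x *\<^sub>R gj j x))"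
  proof
    fix x show "indicator \<Omega> x *\<^sub>R Hs x = -(1/2) * (\<Sum>j\<in>UNIV. indicator \<Omega> x *\<^sub>R gj j x)"
      by (cases "x \<in> \<Omega>") (auto simp: Hs_def ident)
  qed
  have I1: "integrable lborel (\<lambda>x. indicator \<Omega> x *\<^sub>R gj j x)" for j
    using Ij[of j] unfolding set_integrable_def by blast
  have I2: "integral\<^sup>L lborel (\<lambda>x. indicator \<Omega> x *\<^sub>R gj j x) = 0" for j
    using Ij[of j] unfolding set_lebesgue_integral_def by blast
  have HI: "integrable lborel (\<lambda>x. indicator \<Omega> x *\<^sub>R Hs x)"
  proof -
    have "integrable lborel (\<lambda>x. \<Sum>j\<in>UNIV. indicator \<Omega> x *\<^sub>R gj j x)"
      using I1 by (intro Bochner_Integration.integrable_sum) blast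
    then show ?thesis unfolding eqH by (intro integrable_mult_right)
  qed
  have HZ: "integral\<^sup>L lborel (\<lambda>x. indicator \<Omega> x *\<^sub>R Hs x) = 0"
  proof -
    have "integral\<^sup>L lborel (\<lambda>x. \<Sum>j\<in>UNIV. indicator \<Omega> x *\<^sub>R gj j x) = (\<Sum>j\<in>UNIV. integral\<^sup>L lborel (\<lambda>x. indicator \<Omega> x *\<^sub>R gj j x))"
      by (rule Bochner_Integration.integral_sum) (use I1 in blast)
    also have "\<dots> = 0" using I2 by simp
    finally show ?thesis unfolding eqH by (simp only: integral_mult_right_zero)
  qed
  have third: "set_integrable lborel \<Omega> (\<lambda>x. (f x + hamiltonian \<pi> \<psi> x / sqrt (\<pi> x)) * \<pi> x)
          \<and> (LINT x:\<Omega>|lborel. (f x + hamiltonian \<pi> \<psi> x / sqrt (\<pi> x)) * \<pi> x) = (LINT x:\<Omega>|lborel. f x * \<pi> x)"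
    if fi: "set_integrable lborel \<Omega> (\<lambda>x. f x * \<pi> x)" for f
  proof -
    have fi': "integrable lborel (\<lambda>x. indicator \<Omega> x *\<^sub>R (f x * \<pi> x))" using fi unfolding set_integrable_def .
    have eq: "(\<lambda>x. indicator \<Omega> x *\<^sub>R ((f x + hamiltonian \<pi> \<psi> x / sqrt (\<pi> x)) * \<pi> x))
        = (\<lambda>x. indicator \<Omega> x *\<^sub>R (f x * \<pi> x) + indicator \<Omega> x *\<^sub>R Hs x)"
    proof
      fix x show "indicator \<Omega> x *\<^sub>R ((f x + hamiltonian \<pi> \<psi> x / sqrt (\<pi> x)) * \<pi> x)
        = indicator \<Omega> x *\<^sub>R (f x * \<pi> x) + indicator \<Omega> x *\<^sub>R Hs x"
      proof (cases "x \<in> \<Omega>")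
        case True
        then have p: "\<pi> x > 0" using pos by auto
        have "\<pi> x = sqrt (\<pi> x) * sqrt (\<pi> x)" using p by simp
        then have "hamiltonian \<pi> \<psi> x / sqrt (\<pi> x) * \<pi> x = Hs x"
          unfolding Hs_def using p by (metis mult.commute nonzero_mult_div_cancel_left real_sqrt_gt_0_iff times_divide_eq_left less_irrefl)
        then show ?thesis using True by (simp add: algebra_simps)
      qed simp
    qed
    show ?thesis unfolding set_integrable_def set_lebesgue_integral_def eq
      using fi' HI HZ by simp
  qed
  show ?thesis
    using HI HZ third unfolding set_integrable_def set_lebesgue_integral_def Hs_def \<psi>_def by simp
qed


end
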